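(* Let $\kappa$ be a regular infinite cardinal and $A,B$ Boolean algebras with $A$ a subalgebra of $B$. If $A$ is complete (not necessarily a complete subalgebra of $B$) and $B$ has the $\kappa$-FN, then $A$ has the $\kappa$-FN.
   Context: For an infinite cardinal $\kappa$, a Boolean algebra $B$ has the $\kappa$-Freese–Nation property ($\kappa$-FN) if there is a map $f:B\to[B]^{<\kappa}$ such that for all $a,b\in B$ with $a\le b$ there is $c\in f(a)\cap f(b)$ with $a\le c\le b$. *)

theory Defs
  imports Main
begin

text \<open>The ambient Boolean algebra B is a type of class boolean_algebra (B = UNIV).\<close>

definition bool_subalgebra :: "'a::boolean_algebra set \<Rightarrow> bool" where
  "bool_subalgebra A \<longleftrightarrow> bot \<in> A \<and> top \<in> A \<and>
     (\<forall>x\<in>A. \<forall>y\<in>A. sup x y \<in> A \<and> inf x y \<in> A) \<and> (\<forall>x\<in>A. - x \<in> A)"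

text \<open>A subalgebra A is complete (as a Boolean algebra in its own right): every subset
  of A has a least upper bound in A with respect to the induced order. This supremum
  need not be the supremum in B.\<close>

definition complete_subalg :: "'a::boolean_algebra set \<Rightarrow> bool" where
  "complete_subalg A \<longleftrightarrow> (\<forall>X\<subseteq>A. \<exists>s\<in>A. (\<forall>x\<in>X. x \<le> s) \<and>
       (\<forall>t\<in>A. (\<forall>x\<in>X. x \<le> t) \<longrightarrow> s \<le> t))"

text \<open>kappa-Freese-Nation property of the Boolean algebra with carrier A (induced order);
  the cardinal kappa is represented by a cardinal order relation r, and
  [A]^{<kappa} is the set of subsets X of A with |X| <o r.\<close>

definition kappa_FN :: "'k rel \<Rightarrow> 'a::boolean_algebra set \<Rightarrow> bool" where
  "kappa_FN r A \<longleftrightarrow> (\<exists>f. (\<forall>a\<in>A. f a \<subseteq> A \<and> (card_of (f a), r) \<in> ordLess) \<and>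
     (\<forall>a\<in>A. \<forall>b\<in>A. a \<le> b \<longrightarrow> (\<exists>c\<in>f a \<inter> f b. a \<le> c \<and> c \<le> b)))"

end

theory Submission
  imports Defs
begin

theorem lemma6p1:
  fixes r :: "'k rel" and A :: "'a::boolean_algebra set"
  assumes "Cinfinite r" and "regularCard r"
    and "bool_subalgebra A"
    and "complete_subalg A"
    and "kappa_FN r (UNIV :: 'a set)"
  shows "kappa_FN r A"
proof -
  define P where "P x s \<longleftrightarrow> s \<in> A \<and> (\<forall>a\<in>{a\<in>A. a \<le> x}. a \<le> s) \<and>
       (\<forall>t\<in>A. (\<forall>a\<in>{a\<in>A. a \<le> x}. a \<le> t) \<longrightarrow> s \<le> t)" for x s
  define h where "h x = (SOME s. P x s)" for x
  have hP: "P x (h x)" for x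
  proof -
    have "{a\<in>A. a \<le> x} \<subseteq> A" by blast
    then have "\<exists>s. P x s" using assms(4) unfolding complete_subalg_def P_def by blast
    then show ?thesis unfolding h_def by (rule someI_ex)
  qed
  have hA: "h x \<in> A" for x using hP[of x] unfolding P_def by blast
  have hmono: "h x \<le> h y" if "x \<le> y" for x y
  proof -
    have "\<forall>a\<in>{a\<in>A. a \<le> x}. a \<le> h y"
    proof
      fix a assume "a \<in> {a\<in>A. a \<le> x}"
      then have "a \<in> {a\<in>A. a \<le> y}" using that order_trans by blast
      then show "a \<le> h y" using hP[of y] unfolding P_def by blast
    qed
    then show ?thesis using hP[of x] hA[of y] unfolding P_def by blast
  qed
  have hret: "h a = a" if "a \<in> A" for a
  proof -
    have "a \<le> h a" using hP[of a] that unfolding P_def by auto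
    moreover have "h a \<le> a" using hP[of a] that unfolding P_def by auto
    ultimately show ?thesis by simp
  qed
  obtain f :: "'a \<Rightarrow> 'a set" where f1: "\<forall>a. (card_of (f a), r) \<in> ordLess"
    and f2: "\<forall>a b. a \<le> b \<longrightarrow> (\<exists>c\<in>f a \<inter> f b. a \<le> c \<and> c \<le> b)"
    using assms(5) unfolding kappa_FN_def by (metis UNIV_I)
  show ?thesis unfolding kappa_FN_def
  proof (intro exI[of _ "\<lambda>a. h ` f a"] conjI ballI impI)
    fix a assume "a \<in> A"
    show "h ` f a \<subseteq> A" using hA by blast
    show "(card_of (h ` f a), r) \<in> ordLess"
      using card_of_image[of h "f a"] f1 ordLeq_ordLess_trans by blast
  next
    fix a b assume ab: "a \<in> A" "b \<in> A" "a \<le> b"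
    then obtain c where c: "c \<in> f a" "c \<in> f b" "a \<le> c" "c \<le> b" using f2 by blast
    show "\<exists>c\<in>h ` f a \<inter> h ` f b. a \<le> c \<and> c \<le> b"
    proof (intro bexI[of _ "h c"] conjI)
      show "a \<le> h c" using hmono[OF c(3)] hret[OF ab(1)] by simp
      show "h c \<le> b" using hmono[OF c(4)] hret[OF ab(2)] by simp
      show "h c \<in> h ` f a \<inter> h ` f b" using c by blast
    qed
  qed
qed

end
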